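(* Assume $\Delta=0$. Let $\lambda_1,\lambda_2,\lambda_3\in K$ with $\lambda_ic_i\in N$ and $s_i':=s_i\nu_i$ where $\nu_i\in N$ corresponds to $\lambda_ic_i$. (1) If $p=2p_1$ is even, then $(s_1's_2')^{p_1}=(s_1s_2)^{p_1}\nu$ with $\nu=\frac{2}{4-\alpha}\big((2\lambda_1+\lambda_2)c_1+(\alpha\lambda_1+2\lambda_2)c_2\big)=\Big(-2\lambda_2,\ \frac{2(2\beta+\alpha l)}{4-\alpha}\lambda_1+\frac{2(\beta+2l)}{4-\alpha}\lambda_2\Big)$. (2) If $q=2q_1$ is even, then $(s_1's_3')^{q_1}=(s_1s_3)^{q_1}\nu'$ with $\nu'=\frac{2}{4-\beta}\big((2\lambda_1+\lambda_3)c_1+(\beta\lambda_1+2\lambda_3)c_3\big)=\Big(\frac{2(2\alpha+\beta m)}{4-\beta}\lambda_1+\frac{2(\alpha+2m)}{4-\beta}\lambda_3,\ -2\lambda_3\Big)$. (3) If $r=2r_1$ is even, then $(s_2's_3')^{r_1}=(s_2s_3)^{r_1}\nu''$ with $\nu''=\frac{2}{4-\gamma}\big((2\lambda_2+m\lambda_3)c_2+(l\lambda_2+2\lambda_3)c_3\big)=(-2\lambda_2,-2\lambda_3)$.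
   Context: Setting. Let $p,q,r\ge 3$ be integers and $W=W(p,q,r)$ the Coxeter group with generators $s_1,s_2,s_3$ and relations $s_i^2=1$, $(s_1s_2)^p=(s_1s_3)^q=(s_2s_3)^r=1$. Let $\alpha=4\cos^2(\pi k_1/p)$, $\beta=4\cos^2(\pi k_2/q)$, $\gamma=4\cos^2(\pi k_3/r)$ with $\gcd(k_1,p)=\gcd(k_2,q)=\gcd(k_3,r)=1$ (so $0<\alpha,\beta,\gamma<4$), and let $l,m\in\mathbb{C}$ with $lm=\gamma$. Let $K\subset\mathbb{C}$ be a field containing $\alpha,\beta,\gamma,l,m$, and $M$ a $3$-dimensional $K$-vector space with basis $(a_1,a_2,a_3)$. The reflection representation $R:W\to GL(M)$ with parameters $(\alpha,\beta,\gamma;l,m)$ is defined by: for $x=\lambda_1a_1+\lambda_2a_2+\lambda_3a_3$, $R(s_1)x=x-(2\lambda_1-\alpha\lambda_2-\beta\lambda_3)a_1$, $R(s_2)x=x-(-\lambda_1+2\lambda_2-l\lambda_3)a_2$, $R(s_3)x=x-(-\lambda_1-m\lambda_2+2\lambda_3)a_3$. Put $G=R(W)$ and write $s_i$ for $R(s_i)$. Let $\Delta=8-2\alpha-2\beta-2\gamma-(\alpha l+\beta m)$; $R$ is reducible iff $\Delta=0$. Reducible setting. Assume $\Delta=0$. Put $b=(4-\gamma)a_1+(l+2)a_2+(m+2)a_3$; then the space of $G$-fixed vectors is $C_M(G)=Kb$ and $(b,a_2,a_3)$ is a basis of $M$. Let $N=N(G)$ be the subgroup of elements of $G$ acting trivially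 on $M/C_M(G)$. Each $\zeta\in N$ satisfies $\zeta(b)=b$, $\zeta(a_2)=a_2+\lambda b$, $\zeta(a_3)=a_3+\mu b$ for a unique $(\lambda,\mu)\in K^2$; the map $\zeta\mapsto(\lambda,\mu)$ is an injective group homomorphism $N\to (K^2,+)$, through which $N$ is identified with an additive subgroup of $K^2$ (and written additively). Put $c_1=(\alpha,\beta)$, $c_2=(-2,l)$, $c_3=(m,-2)\in K^2$. *)

theory Defs
  imports "HOL-Analysis.Analysis"
begin

text \<open>Coordinates with respect to the basis (a1,a2,a3) of M; M = K^3 is embedded in complex^3,
  linear maps are 3x3 complex matrices (entries lie in K).\<close>

definition is_subfield_of_complex :: "complex set \<Rightarrow> bool" where
  "is_subfield_of_complex K \<longleftrightarrow> 0 \<in> K \<and> 1 \<in> K \<and>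
     (\<forall>x\<in>K. \<forall>y\<in>K. x + y \<in> K \<and> x - y \<in> K \<and> x * y \<in> K) \<and>
     (\<forall>x\<in>K. x \<noteq> 0 \<longrightarrow> inverse x \<in> K)"

definition a1 :: "complex^3" where "a1 = axis 1 1"
definition a2 :: "complex^3" where "a2 = axis 2 1"
definition a3 :: "complex^3" where "a3 = axis 3 1"

definition refl1 :: "complex \<Rightarrow> complex \<Rightarrow> complex^3^3" where
  "refl1 \<alpha> \<beta> = matrix (\<lambda>x. x - (2 * x$1 - \<alpha> * x$2 - \<beta> * x$3) *s a1)"
definition refl2 :: "complex \<Rightarrow> complex^3^3" where
  "refl2 l = matrix (\<lambda>x. x - (- x$1 + 2 * x$2 - l * x$3) *s a2)"
definition refl3 :: "complex \<Rightarrow> complex^3^3" where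
  "refl3 m = matrix (\<lambda>x. x - (- x$1 - m * x$2 + 2 * x$3) *s a3)"

text \<open>Subgroup of GL(M) generated by a set S of involutions (closure under left multiplication
  by generators, starting from the identity; since generators are involutions this is the
  generated group).\<close>
inductive_set gen_group :: "(complex^3^3) set \<Rightarrow> (complex^3^3) set" for S where
  gen_one: "mat 1 \<in> gen_group S"
| gen_mult: "g \<in> gen_group S \<Longrightarrow> s \<in> S \<Longrightarrow> s ** g \<in> gen_group S"

fun mpow :: "complex^3^3 \<Rightarrow> nat \<Rightarrow> complex^3^3" where
  "mpow A 0 = mat 1"
| "mpow A (Suc n) = A ** mpow A n"

definition Delta :: "complex \<Rightarrow> complex \<Rightarrow> complex \<Rightarrow> complex \<Rightarrow> complex \<Rightarrow> complex" where
  "Delta \<alpha> \<beta> \<gamma> l m = 8 - 2*\<alpha> - 2*\<beta> - 2*\<gamma> - (\<alpha> * l + \<beta> * m)"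

definition bvec :: "complex \<Rightarrow> complex \<Rightarrow> complex \<Rightarrow> complex^3" where
  "bvec \<gamma> l m = (4 - \<gamma>) *s a1 + (l + 2) *s a2 + (m + 2) *s a3"

definition corresponds :: "complex^3 \<Rightarrow> complex^3^3 \<Rightarrow> complex \<times> complex \<Rightarrow> bool" where
  "corresponds b Z v \<longleftrightarrow> Z *v b = b \<and> Z *v a2 = a2 + fst v *s b \<and> Z *v a3 = a3 + snd v *s b"

definition psc :: "complex \<Rightarrow> complex \<times> complex \<Rightarrow> complex \<times> complex" where
  "psc c v = (c * fst v, c * snd v)"
definition padd :: "complex \<times> complex \<Rightarrow> complex \<times> complex \<Rightarrow> complex \<times> complex" where
  "padd v w = (fst v + fst w, snd v + snd w)"

end

theory Submission
  imports Defs
begin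



lemma refl1_mv: "refl1 \<alpha> \<beta> *v x = x - (2 * x$1 - \<alpha> * x$2 - \<beta> * x$3) *s a1"
  by (simp add: vec_eq_iff matrix_vector_mult_def matrix_def refl1_def a1_def axis_def sum_3 forall_3)
lemma refl2_mv: "refl2 l *v x = x - (- x$1 + 2 * x$2 - l * x$3) *s a2"
  by (simp add: vec_eq_iff matrix_vector_mult_def matrix_def refl2_def a2_def axis_def sum_3 forall_3)
lemma refl3_mv: "refl3 m *v x = x - (- x$1 - m * x$2 + 2 * x$3) *s a3"
  by (simp add: vec_eq_iff matrix_vector_mult_def matrix_def refl3_def a3_def axis_def sum_3 forall_3)

definition pi1 :: "complex^3 \<Rightarrow> complex^3 \<Rightarrow> complex" where
  "pi1 b x = x$2 - (b$2/b$1) * x$1"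
definition pi2 :: "complex^3 \<Rightarrow> complex^3 \<Rightarrow> complex" where
  "pi2 b x = x$3 - (b$3/b$1) * x$1"

lemma decomp: assumes "b$1 \<noteq> 0"
  shows "x = (x$1 / b$1) *s b + pi1 b x *s a2 + pi2 b x *s a3"
  using assms by (simp add: vec_eq_iff forall_3 pi1_def pi2_def a2_def a3_def axis_def field_simps)

lemma pi_b: assumes "b$1 \<noteq> 0" shows
  "pi1 b (x + c *s b) = pi1 b x" "pi2 b (x + c *s b) = pi2 b x"
  using assms by (auto simp: pi1_def pi2_def field_simps)

lemma pi_bb: assumes "b$1 \<noteq> 0" shows "pi1 b b = 0" "pi2 b b = 0"
  using assms by (auto simp: pi1_def pi2_def)

lemma pi_lin:
  "pi1 b (x + y) = pi1 b x + pi1 b y" "pi2 b (x + y) = pi2 b x + pi2 b y"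
  "pi1 b (c *s x) = c * pi1 b x" "pi2 b (c *s x) = c * pi2 b x"
  by (auto simp: pi1_def pi2_def algebra_simps add_divide_distrib)

lemma corr_act: assumes "b$1 \<noteq> 0" "corresponds b V v"
  shows "V *v x = x + (fst v * pi1 b x + snd v * pi2 b x) *s b"
proof -
  have "V *v x = V *v ((x$1 / b$1) *s b + pi1 b x *s a2 + pi2 b x *s a3)"
    using decomp[OF assms(1)] by metis
  also have "\<dots> = (x$1 / b$1) *s b + pi1 b x *s (a2 + fst v *s b) + pi2 b x *s (a3 + snd v *s b)"
    using assms(2) unfolding corresponds_def
    by (simp add: matrix_vector_right_distrib vector_scalar_commute)
  also have "\<dots> = ((x$1 / b$1) *s b + pi1 b x *s a2 + pi2 b x *s a3) + (fst v * pi1 b x + snd v * pi2 b x) *s b"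
    by (simp add: vec_eq_iff algebra_simps)
  finally show ?thesis using decomp[OF assms(1), of x] by metis
qed

lemma mpow_b: assumes "T *v b = b" shows "mpow T k *v b = b"
  by (induction k) (simp_all add: matrix_vector_mul_assoc[symmetric] assms)

lemma mpow_Suc_v: "mpow T (Suc k) *v x = T *v (mpow T k *v x)"
  by (simp add: matrix_vector_mul_assoc)

lemma gen_pow:
  fixes T A V :: "complex^3^3" and b :: "complex^3"
  assumes b1: "b$1 \<noteq> 0" and Tb: "T *v b = b"
  and Ax: "\<And>x. A *v x = T *v x + (f1 * pi1 b x + f2 * pi2 b x) *s b"
  and Vx: "\<And>x. V *v x = x + (g1 * pi1 b x + g2 * pi2 b x) *s b"
  and T1: "\<And>x. pi1 b (T *v x) = t11 * pi1 b x + t12 * pi2 b x"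
  and T2: "\<And>x. pi2 b (T *v x) = t21 * pi1 b x + t22 * pi2 b x"
  and pw1: "\<And>x. pi1 b (mpow T n *v x) = - pi1 b x"
  and pw2: "\<And>x. pi2 b (mpow T n *v x) = - pi2 b x"
  and G1: "g1*(1-t11) - g2*t21 = 2*f1" and G2: "-g1*t12 + g2*(1-t22) = 2*f2"
  shows "mpow A n = mpow T n ** V"
proof -
  define F where "F x = f1 * pi1 b x + f2 * pi2 b x" for x
  have Fb: "F (y + c *s b) = F y" for y c by (simp add: F_def pi_b[OF b1])
  have Ak: "mpow A k *v x = mpow T k *v x + (\<Sum>j<k. F (mpow T j *v x)) *s b" for k x
  proof (induction k)
    case 0 then show ?case by simp
  next
    case (Suc k)
    have "mpow A (Suc k) *v x = A *v (mpow A k *v x)" by (rule mpow_Suc_v)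
    also have "\<dots> = T *v (mpow T k *v x + (\<Sum>j<k. F (mpow T j *v x)) *s b)
        + F (mpow T k *v x + (\<Sum>j<k. F (mpow T j *v x)) *s b) *s b"
      using Suc Ax F_def by simp
    also have "\<dots> = mpow T (Suc k) *v x + (\<Sum>j<Suc k. F (mpow T j *v x)) *s b"
      by (simp add: Fb matrix_vector_right_distrib vector_scalar_commute Tb
            algebra_simps vector_sadd_rdistrib matrix_vector_mul_assoc[symmetric])
    finally show ?case .
  qed
  define G where "G x = (g1 * pi1 b x + g2 * pi2 b x) / 2" for x
  have FG: "F y = G y - G (T *v y)" for y
  proof -
    have "G y - G (T *v y) = (pi1 b y * (g1*(1-t11) - g2*t21) + pi2 b y * (-g1*t12 + g2*(1-t22))) / 2"
      unfolding G_def T1 T2 by (simp add: algebra_simps diff_divide_distrib)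
    also have "\<dots> = F y" unfolding G1 G2 F_def by simp
    finally show ?thesis by simp
  qed
  have S: "(\<Sum>j<n. F (mpow T j *v x)) = g1 * pi1 b x + g2 * pi2 b x" for x
  proof -
    have "(\<Sum>j<n. F (mpow T j *v x)) = (\<Sum>j<n. G (mpow T j *v x) - G (mpow T (Suc j) *v x))"
      by (simp only: FG mpow_Suc_v)
    also have "\<dots> = G x - G (mpow T n *v x)"
      using sum_lessThan_telescope'[of "\<lambda>j. G (mpow T j *v x)" n] by simp
    also have "\<dots> = g1 * pi1 b x + g2 * pi2 b x" by (simp add: G_def pw1 pw2 field_simps)
    finally show ?thesis .
  qed
  show ?thesis
  proof (subst matrix_eq, intro allI)
    fix x
    show "mpow A n *v x = (mpow T n ** V) *v x"
      by (simp add: Ak S matrix_vector_mul_assoc[symmetric] Vx matrix_vector_right_distrib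
          vector_scalar_commute mpow_b[OF Tb])
  qed
qed



lemma id_s1a:
  fixes xa xb xc al be ga l m ea eb La Lb Lc w :: complex
  assumes "2*ea - 1 - l*eb = 0" and "(4 - l*m)*eb - (m + 2) = 0" and "al*(1 + l*eb) + 2*be*eb - 4 = 0" and "8 - 2*al - 2*be - 2*l*m - al*l - be*m = 0"
  shows "xb - ea*(xa - (2*xa - al*xb - be*xc)) = (1 - al*ea)*(xb - ea*xa) + (-(be*ea))*(xc - eb*xa)"
proof -
  have H0: "4*((xb - ea*(xa - (2*xa - al*xb - be*xc))) - ((1 - al*ea)*(xb - ea*xa) + (-(be*ea))*(xc - eb*xa))) = ((-2)*al*ea*xa + (-1)*al*eb*l*xa + (-1)*al*xa + (-2)*be*eb*xa + (4)*xa)*(2*ea - 1 - l*eb) + ((-1)*eb*l*xa + (-1)*xa)*(al*(1 + l*eb) + 2*be*eb - 4)" by (simp add: algebra_simps)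
  have H1: "((-2)*al*ea*xa + (-1)*al*eb*l*xa + (-1)*al*xa + (-2)*be*eb*xa + (4)*xa)*(2*ea - 1 - l*eb) + ((-1)*eb*l*xa + (-1)*xa)*(al*(1 + l*eb) + 2*be*eb - 4) = 0" using assms by (simp only: mult_zero_right add_0_right add_0_left)
  have H: "4*((xb - ea*(xa - (2*xa - al*xb - be*xc))) - ((1 - al*ea)*(xb - ea*xa) + (-(be*ea))*(xc - eb*xa))) = 0" by (rule trans[OF H0 H1])
  show ?thesis using H  by (metis mult_eq_0_iff right_minus_eq zero_neq_numeral)
qed

lemma id_s1b:
  fixes xa xb xc al be ga l m ea eb La Lb Lc w :: complex
  assumes "2*ea - 1 - l*eb = 0" and "(4 - l*m)*eb - (m + 2) = 0" and "al*(1 + l*eb) + 2*be*eb - 4 = 0" and "8 - 2*al - 2*be - 2*l*m - al*l - be*m = 0"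
  shows "xc - eb*(xa - (2*xa - al*xb - be*xc)) = (-(al*eb))*(xb - ea*xa) + (1 - be*eb)*(xc - eb*xa)"
proof -
  have H0: "2*((xc - eb*(xa - (2*xa - al*xb - be*xc))) - ((-(al*eb))*(xb - ea*xa) + (1 - be*eb)*(xc - eb*xa))) = ((-1)*al*eb*xa)*(2*ea - 1 - l*eb) + ((-1)*eb*xa)*(al*(1 + l*eb) + 2*be*eb - 4)" by (simp add: algebra_simps)
  have H1: "((-1)*al*eb*xa)*(2*ea - 1 - l*eb) + ((-1)*eb*xa)*(al*(1 + l*eb) + 2*be*eb - 4) = 0" using assms by (simp only: mult_zero_right add_0_right add_0_left)
  have H: "2*((xc - eb*(xa - (2*xa - al*xb - be*xc))) - ((-(al*eb))*(xb - ea*xa) + (1 - be*eb)*(xc - eb*xa))) = 0" by (rule trans[OF H0 H1])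
  show ?thesis using H  by (metis mult_eq_0_iff right_minus_eq zero_neq_numeral)
qed

lemma id_s2a:
  fixes xa xb xc al be ga l m ea eb La Lb Lc w :: complex
  assumes "2*ea - 1 - l*eb = 0" and "(4 - l*m)*eb - (m + 2) = 0" and "al*(1 + l*eb) + 2*be*eb - 4 = 0" and "8 - 2*al - 2*be - 2*l*m - al*l - be*m = 0"
  shows "(xb - (-xa + 2*xb - l*xc)) - ea*xa = (-1)*(xb - ea*xa) + l*(xc - eb*xa)"
proof -
  have H0: "((xb - (-xa + 2*xb - l*xc)) - ea*xa) - ((-1)*(xb - ea*xa) + l*(xc - eb*xa)) = ((-1)*xa)*(2*ea - 1 - l*eb)" by (simp add: algebra_simps)
  have H1: "((-1)*xa)*(2*ea - 1 - l*eb) = 0" using assms by (simp only: mult_zero_right add_0_right add_0_left)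
  have H: "((xb - (-xa + 2*xb - l*xc)) - ea*xa) - ((-1)*(xb - ea*xa) + l*(xc - eb*xa)) = 0" by (rule trans[OF H0 H1])
  show ?thesis using H  by (metis mult_eq_0_iff right_minus_eq zero_neq_numeral)
qed

lemma id_s3b:
  fixes xa xb xc al be ga l m ea eb La Lb Lc w :: complex
  assumes "2*ea - 1 - l*eb = 0" and "(4 - l*m)*eb - (m + 2) = 0" and "al*(1 + l*eb) + 2*be*eb - 4 = 0" and "8 - 2*al - 2*be - 2*l*m - al*l - be*m = 0"
  shows "(xc - (-xa - m*xb + 2*xc)) - eb*xa = m*(xb - ea*xa) + (-1)*(xc - eb*xa)"
proof -
  have H0: "2*(((xc - (-xa - m*xb + 2*xc)) - eb*xa) - (m*(xb - ea*xa) + (-1)*(xc - eb*xa))) = (m*xa)*(2*ea - 1 - l*eb) + ((-1)*xa)*((4 - l*m)*eb - (m + 2))" by (simp add: algebra_simps)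
  have H1: "(m*xa)*(2*ea - 1 - l*eb) + ((-1)*xa)*((4 - l*m)*eb - (m + 2)) = 0" using assms by (simp only: mult_zero_right add_0_right add_0_left)
  have H: "2*(((xc - (-xa - m*xb + 2*xc)) - eb*xa) - (m*(xb - ea*xa) + (-1)*(xc - eb*xa))) = 0" by (rule trans[OF H0 H1])
  show ?thesis using H  by (metis mult_eq_0_iff right_minus_eq zero_neq_numeral)
qed

lemma id_detS1:
  fixes xa xb xc al be ga l m ea eb La Lb Lc w :: complex
  assumes "2*ea - 1 - l*eb = 0" and "(4 - l*m)*eb - (m + 2) = 0" and "al*(1 + l*eb) + 2*be*eb - 4 = 0" and "8 - 2*al - 2*be - 2*l*m - al*l - be*m = 0"
  shows "(1 - al*ea)*(1 - be*eb) - (-(be*ea))*(-(al*eb)) = -1"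
proof -
  have H0: "2*(((1 - al*ea)*(1 - be*eb) - (-(be*ea))*(-(al*eb))) - (-1)) = ((-1)*al)*(2*ea - 1 - l*eb) + ((-1))*(al*(1 + l*eb) + 2*be*eb - 4)" by (simp add: algebra_simps)
  have H1: "((-1)*al)*(2*ea - 1 - l*eb) + ((-1))*(al*(1 + l*eb) + 2*be*eb - 4) = 0" using assms by (simp only: mult_zero_right add_0_right add_0_left)
  have H: "2*(((1 - al*ea)*(1 - be*eb) - (-(be*ea))*(-(al*eb))) - (-1)) = 0" by (rule trans[OF H0 H1])
  show ?thesis using H  by (metis mult_eq_0_iff right_minus_eq zero_neq_numeral)
qed

lemma c1_tr:
  fixes xa xb xc al be ga l m ea eb La Lb Lc w :: complex
  assumes "2*ea - 1 - l*eb = 0" and "(4 - l*m)*eb - (m + 2) = 0" and "al*(1 + l*eb) + 2*be*eb - 4 = 0" and "8 - 2*al - 2*be - 2*l*m - al*l - be*m = 0"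
  shows "((1 - al*ea)*(-1) + (-(be*ea))*0) + ((-(al*eb))*l + (1 - be*eb)*1) = al - 2"
proof -
  have H0: "2*((((1 - al*ea)*(-1) + (-(be*ea))*0) + ((-(al*eb))*l + (1 - be*eb)*1)) - (al - 2)) = (al)*(2*ea - 1 - l*eb) + ((-1))*(al*(1 + l*eb) + 2*be*eb - 4)" by (simp add: algebra_simps)
  have H1: "(al)*(2*ea - 1 - l*eb) + ((-1))*(al*(1 + l*eb) + 2*be*eb - 4) = 0" using assms by (simp only: mult_zero_right add_0_right add_0_left)
  have H: "2*((((1 - al*ea)*(-1) + (-(be*ea))*0) + ((-(al*eb))*l + (1 - be*eb)*1)) - (al - 2)) = 0" by (rule trans[OF H0 H1])
  show ?thesis using H  by (metis mult_eq_0_iff right_minus_eq zero_neq_numeral)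
qed

lemma c1_G1:
  fixes xa xb xc al be ga l m ea eb La Lb Lc w :: complex
  assumes "2*ea - 1 - l*eb = 0" and "(4 - l*m)*eb - (m + 2) = 0" and "al*(1 + l*eb) + 2*be*eb - 4 = 0" and "8 - 2*al - 2*be - 2*l*m - al*l - be*m = 0" and "w*al - (4*w - (2*(2*be + al*l)*La + 2*(be + 2*l)*Lb)) = 0" and "4 - al \<noteq> 0"
  shows "(-2*Lb)*(1 - ((1 - al*ea)*(-1) + (-(be*ea))*0)) - w*((-(al*eb))*(-1) + (1 - be*eb)*0) = 2*((La*al)*(-1) + (La*be)*0 + (-2*Lb))"
proof -
  have H0: "(4 - al)*(((-2*Lb)*(1 - ((1 - al*ea)*(-1) + (-(be*ea))*0)) - w*((-(al*eb))*(-1) + (1 - be*eb)*0)) - (2*((La*al)*(-1) + (La*be)*0 + (-2*Lb)))) = ((4)*Lb*al + (-1)*Lb*al*al)*(2*ea - 1 - l*eb) + ((-2)*La*al + (-1)*Lb*al)*(al*(1 + l*eb) + 2*be*eb - 4) + (al*eb)*(w*al - (4*w - (2*(2*be + al*l)*La + 2*(be + 2*l)*Lb)))" by (simp add: algebra_simps)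
  have H1: "((4)*Lb*al + (-1)*Lb*al*al)*(2*ea - 1 - l*eb) + ((-2)*La*al + (-1)*Lb*al)*(al*(1 + l*eb) + 2*be*eb - 4) + (al*eb)*(w*al - (4*w - (2*(2*be + al*l)*La + 2*(be + 2*l)*Lb))) = 0" using assms by (simp only: mult_zero_right add_0_right add_0_left)
  have H: "(4 - al)*(((-2*Lb)*(1 - ((1 - al*ea)*(-1) + (-(be*ea))*0)) - w*((-(al*eb))*(-1) + (1 - be*eb)*0)) - (2*((La*al)*(-1) + (La*be)*0 + (-2*Lb)))) = 0" by (rule trans[OF H0 H1])
  show ?thesis using H assms(6) by (metis mult_eq_0_iff right_minus_eq zero_neq_numeral)
qed

lemma c1_G2:
  fixes xa xb xc al be ga l m ea eb La Lb Lc w :: complex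
  assumes "2*ea - 1 - l*eb = 0" and "(4 - l*m)*eb - (m + 2) = 0" and "al*(1 + l*eb) + 2*be*eb - 4 = 0" and "8 - 2*al - 2*be - 2*l*m - al*l - be*m = 0" and "w*al - (4*w - (2*(2*be + al*l)*La + 2*(be + 2*l)*Lb)) = 0" and "4 - al \<noteq> 0"
  shows "-((-2*Lb))*((1 - al*ea)*l + (-(be*ea))*1) + w*(1 - ((-(al*eb))*l + (1 - be*eb)*1)) = 2*((La*al)*l + (La*be)*1 + (Lb*l))"
proof -
  have H0: "2*((4 - al)*((-((-2*Lb))*((1 - al*ea)*l + (-(be*ea))*1) + w*(1 - ((-(al*eb))*l + (1 - be*eb)*1))) - (2*((La*al)*l + (La*be)*1 + (Lb*l))))) = ((2)*Lb*al*be + (-8)*Lb*al*l + (2)*Lb*al*al*l + (-8)*Lb*be)*(2*ea - 1 - l*eb) + ((2)*La*al*l + (2)*Lb*al*l + (-4)*Lb*l + (-1)*al*w + (4)*w)*(al*(1 + l*eb) + 2*be*eb - 4) + ((-4) + al + (-1)*al*eb*l)*(w*al - (4*w - (2*(2*be + al*l)*La + 2*(be + 2*l)*Lb)))" by (simp add: algebra_simps)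
  have H1: "((2)*Lb*al*be + (-8)*Lb*al*l + (2)*Lb*al*al*l + (-8)*Lb*be)*(2*ea - 1 - l*eb) + ((2)*La*al*l + (2)*Lb*al*l + (-4)*Lb*l + (-1)*al*w + (4)*w)*(al*(1 + l*eb) + 2*be*eb - 4) + ((-4) + al + (-1)*al*eb*l)*(w*al - (4*w - (2*(2*be + al*l)*La + 2*(be + 2*l)*Lb))) = 0" using assms by (simp only: mult_zero_right add_0_right add_0_left)
  have H: "2*((4 - al)*((-((-2*Lb))*((1 - al*ea)*l + (-(be*ea))*1) + w*(1 - ((-(al*eb))*l + (1 - be*eb)*1))) - (2*((La*al)*l + (La*be)*1 + (Lb*l))))) = 0" by (rule trans[OF H0 H1])
  show ?thesis using H assms(6) by (metis mult_eq_0_iff right_minus_eq zero_neq_numeral)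
qed

lemma c2_tr:
  fixes xa xb xc al be ga l m ea eb La Lb Lc w :: complex
  assumes "2*eb - 1 - m*ea = 0" and "(4 - l*m)*ea - (l + 2) = 0" and "be*(1 + m*ea) + 2*al*ea - 4 = 0" and "8 - 2*al - 2*be - 2*l*m - al*l - be*m = 0"
  shows "((1 - al*ea)*1 + (-(be*ea))*m) + ((-(al*eb))*0 + (1 - be*eb)*(-1)) = be - 2"
proof -
  have H0: "2*((((1 - al*ea)*1 + (-(be*ea))*m) + ((-(al*eb))*0 + (1 - be*eb)*(-1))) - (be - 2)) = (be)*(2*eb - 1 - m*ea) + ((-1))*(be*(1 + m*ea) + 2*al*ea - 4)" by (simp add: algebra_simps)
  have H1: "(be)*(2*eb - 1 - m*ea) + ((-1))*(be*(1 + m*ea) + 2*al*ea - 4) = 0" using assms by (simp only: mult_zero_right add_0_right add_0_left)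
  have H: "2*((((1 - al*ea)*1 + (-(be*ea))*m) + ((-(al*eb))*0 + (1 - be*eb)*(-1))) - (be - 2)) = 0" by (rule trans[OF H0 H1])
  show ?thesis using H  by (metis mult_eq_0_iff right_minus_eq zero_neq_numeral)
qed

lemma c2_G1:
  fixes xa xb xc al be ga l m ea eb La Lb Lc w :: complex
  assumes "2*eb - 1 - m*ea = 0" and "(4 - l*m)*ea - (l + 2) = 0" and "be*(1 + m*ea) + 2*al*ea - 4 = 0" and "8 - 2*al - 2*be - 2*l*m - al*l - be*m = 0" and "w*be - (4*w - (2*(2*al + be*m)*La + 2*(al + 2*m)*Lc)) = 0" and "4 - be \<noteq> 0"
  shows "w*(1 - ((1 - al*ea)*1 + (-(be*ea))*m)) - (-2*Lc)*((-(al*eb))*1 + (1 - be*eb)*m) = 2*((La*al)*1 + (La*be)*m + (Lc*m))"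
proof -
  have H0: "2*((4 - be)*((w*(1 - ((1 - al*ea)*1 + (-(be*ea))*m)) - (-2*Lc)*((-(al*eb))*1 + (1 - be*eb)*m)) - (2*((La*al)*1 + (La*be)*m + (Lc*m))))) = ((-8)*Lc*al + (2)*Lc*al*be + (-8)*Lc*be*m + (2)*Lc*be*be*m)*(2*eb - 1 - m*ea) + ((2)*La*be*m + (2)*Lc*be*m + (-4)*Lc*m + (-1)*be*w + (4)*w)*(be*(1 + m*ea) + 2*al*ea - 4) + ((-4) + be + (-1)*be*ea*m)*(w*be - (4*w - (2*(2*al + be*m)*La + 2*(al + 2*m)*Lc)))" by (simp add: algebra_simps)
  have H1: "((-8)*Lc*al + (2)*Lc*al*be + (-8)*Lc*be*m + (2)*Lc*be*be*m)*(2*eb - 1 - m*ea) + ((2)*La*be*m + (2)*Lc*be*m + (-4)*Lc*m + (-1)*be*w + (4)*w)*(be*(1 + m*ea) + 2*al*ea - 4) + ((-4) + be + (-1)*be*ea*m)*(w*be - (4*w - (2*(2*al + be*m)*La + 2*(al + 2*m)*Lc))) = 0" using assms by (simp only: mult_zero_right add_0_right add_0_left)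
  have H: "2*((4 - be)*((w*(1 - ((1 - al*ea)*1 + (-(be*ea))*m)) - (-2*Lc)*((-(al*eb))*1 + (1 - be*eb)*m)) - (2*((La*al)*1 + (La*be)*m + (Lc*m))))) = 0" by (rule trans[OF H0 H1])
  show ?thesis using H assms(6) by (metis mult_eq_0_iff right_minus_eq zero_neq_numeral)
qed

lemma c2_G2:
  fixes xa xb xc al be ga l m ea eb La Lb Lc w :: complex
  assumes "2*eb - 1 - m*ea = 0" and "(4 - l*m)*ea - (l + 2) = 0" and "be*(1 + m*ea) + 2*al*ea - 4 = 0" and "8 - 2*al - 2*be - 2*l*m - al*l - be*m = 0" and "w*be - (4*w - (2*(2*al + be*m)*La + 2*(al + 2*m)*Lc)) = 0" and "4 - be \<noteq> 0"
  shows "-(w)*((1 - al*ea)*0 + (-(be*ea))*(-1)) + (-2*Lc)*(1 - ((-(al*eb))*0 + (1 - be*eb)*(-1))) = 2*((La*al)*0 + (La*be)*(-1) + (-2*Lc))"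
proof -
  have H0: "(4 - be)*((-(w)*((1 - al*ea)*0 + (-(be*ea))*(-1)) + (-2*Lc)*(1 - ((-(al*eb))*0 + (1 - be*eb)*(-1)))) - (2*((La*al)*0 + (La*be)*(-1) + (-2*Lc)))) = ((4)*Lc*be + (-1)*Lc*be*be)*(2*eb - 1 - m*ea) + ((-2)*La*be + (-1)*Lc*be)*(be*(1 + m*ea) + 2*al*ea - 4) + (be*ea)*(w*be - (4*w - (2*(2*al + be*m)*La + 2*(al + 2*m)*Lc)))" by (simp add: algebra_simps)
  have H1: "((4)*Lc*be + (-1)*Lc*be*be)*(2*eb - 1 - m*ea) + ((-2)*La*be + (-1)*Lc*be)*(be*(1 + m*ea) + 2*al*ea - 4) + (be*ea)*(w*be - (4*w - (2*(2*al + be*m)*La + 2*(al + 2*m)*Lc))) = 0" using assms by (simp only: mult_zero_right add_0_right add_0_left)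
  have H: "(4 - be)*((-(w)*((1 - al*ea)*0 + (-(be*ea))*(-1)) + (-2*Lc)*(1 - ((-(al*eb))*0 + (1 - be*eb)*(-1)))) - (2*((La*al)*0 + (La*be)*(-1) + (-2*Lc)))) = 0" by (rule trans[OF H0 H1])
  show ?thesis using H assms(6) by (metis mult_eq_0_iff right_minus_eq zero_neq_numeral)
qed

lemma c3_tr:
  fixes xa xb xc al be ga l m ea eb La Lb Lc w :: complex
  assumes "2*ea - 1 - l*eb = 0" and "(4 - l*m)*eb - (m + 2) = 0" and "al*(1 + l*eb) + 2*be*eb - 4 = 0" and "8 - 2*al - 2*be - 2*l*m - al*l - be*m = 0"
  shows "((-1)*1 + l*m) + (0*0 + 1*(-1)) = l*m - 2"
proof -
  have H: "(((-1)*1 + l*m) + (0*0 + 1*(-1))) - (l*m - 2) = 0" by (simp add: algebra_simps)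
  show ?thesis using H  by (metis mult_eq_0_iff right_minus_eq zero_neq_numeral)
qed

lemma c3_G1:
  fixes xa xb xc al be ga l m ea eb La Lb Lc w :: complex
  assumes "2*ea - 1 - l*eb = 0" and "(4 - l*m)*eb - (m + 2) = 0" and "al*(1 + l*eb) + 2*be*eb - 4 = 0" and "8 - 2*al - 2*be - 2*l*m - al*l - be*m = 0"
  shows "(-2*Lb)*(1 - ((-1)*1 + l*m)) - (-2*Lc)*(0*1 + 1*m) = 2*((-2*Lb)*1 + (Lb*l)*m + (Lc*m))"
proof -
  have H: "((-2*Lb)*(1 - ((-1)*1 + l*m)) - (-2*Lc)*(0*1 + 1*m)) - (2*((-2*Lb)*1 + (Lb*l)*m + (Lc*m))) = 0" by (simp add: algebra_simps)
  show ?thesis using H  by (metis mult_eq_0_iff right_minus_eq zero_neq_numeral)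
qed

lemma c3_G2:
  fixes xa xb xc al be ga l m ea eb La Lb Lc w :: complex
  assumes "2*ea - 1 - l*eb = 0" and "(4 - l*m)*eb - (m + 2) = 0" and "al*(1 + l*eb) + 2*be*eb - 4 = 0" and "8 - 2*al - 2*be - 2*l*m - al*l - be*m = 0"
  shows "-((-2*Lb))*((-1)*0 + l*(-1)) + (-2*Lc)*(1 - (0*0 + 1*(-1))) = 2*((-2*Lb)*0 + (Lb*l)*(-1) + (-2*Lc))"
proof -
  have H: "(-((-2*Lb))*((-1)*0 + l*(-1)) + (-2*Lc)*(1 - (0*0 + 1*(-1)))) - (2*((-2*Lb)*0 + (Lb*l)*(-1) + (-2*Lc))) = 0" by (simp add: algebra_simps)
  show ?thesis using H  by (metis mult_eq_0_iff right_minus_eq zero_neq_numeral)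
qed



lemma ch2:
  fixes t11 t12 t21 t22 c y1 y2 :: complex
  assumes "t11 + t22 = c" "t11*t22 - t12*t21 = 1"
  shows "t11*(t11*y1+t12*y2) + t12*(t21*y1+t22*y2) = c*(t11*y1+t12*y2) - y1 \<and>
     t21*(t11*y1+t12*y2) + t22*(t21*y1+t22*y2) = c*(t21*y1+t22*y2) - y2"
proof -
  have "t11*(t11*y1+t12*y2) + t12*(t21*y1+t22*y2) - (c*(t11*y1+t12*y2) - y1) = (1 - (t11*t22 - t12*t21)) * y1"
    unfolding assms(1)[symmetric] by (simp add: algebra_simps)
  moreover have "t21*(t11*y1+t12*y2) + t22*(t21*y1+t22*y2) - (c*(t21*y1+t22*y2) - y2) = (1 - (t11*t22 - t12*t21)) * y2"
    unfolding assms(1)[symmetric] by (simp add: algebra_simps)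
  ultimately show ?thesis using assms(2) by simp
qed

lemma cheb:
  fixes T :: "complex^3^3" and b :: "complex^3" and \<phi> :: real
  assumes T1: "\<And>x. pi1 b (T *v x) = t11 * pi1 b x + t12 * pi2 b x"
  and T2: "\<And>x. pi2 b (T *v x) = t21 * pi1 b x + t22 * pi2 b x"
  and tr: "t11 + t22 = 2 * of_real (cos \<phi>)" and det: "t11*t22 - t12*t21 = 1"
  and s: "sin \<phi> \<noteq> 0" "sin (real n * \<phi>) = 0" "sin (real (n - 1) * \<phi>) = sin \<phi>" "n \<ge> 1"
  shows "pi1 b (mpow T n *v x) = - pi1 b x \<and> pi2 b (mpow T n *v x) = - pi2 b x"
proof -
  define c where "c = 2 * complex_of_real (cos \<phi>)"
  define U where "U k = complex_of_real (sin (real k * \<phi>) / sin \<phi>)" for k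
  have trig: "sin (a + \<phi>) = 2 * cos \<phi> * sin a - sin (a - \<phi>)" for a
    by (simp add: sin_add sin_diff algebra_simps)
  have Urec: "U (Suc (Suc k)) = c * U (Suc k) - U k" for k
  proof -
    have e1: "real (Suc (Suc k)) * \<phi> = real (Suc k) * \<phi> + \<phi>" by (simp add: algebra_simps)
    have e2: "real k * \<phi> = real (Suc k) * \<phi> - \<phi>" by (simp add: algebra_simps)
    have r: "sin (real (Suc (Suc k)) * \<phi>) / sin \<phi> = 2 * cos \<phi> * (sin (real (Suc k) * \<phi>) / sin \<phi>) - sin (real k * \<phi>) / sin \<phi>"
      unfolding e1 e2 trig by (simp add: diff_divide_distrib)
    show ?thesis unfolding U_def c_def r by simp
  qed
  have P: "pi1 b (mpow T (Suc k) *v x) = U (Suc k) * pi1 b (T *v x) - U k * pi1 b x \<and>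
           pi2 b (mpow T (Suc k) *v x) = U (Suc k) * pi2 b (T *v x) - U k * pi2 b x" for k
  proof (induction k)
    case 0 then show ?case using s(1) by (simp add: U_def)
  next
    case (Suc k)
    have C: "t11 * pi1 b (T *v x) + t12 * pi2 b (T *v x) = c * pi1 b (T *v x) - pi1 b x"
            "t21 * pi1 b (T *v x) + t22 * pi2 b (T *v x) = c * pi2 b (T *v x) - pi2 b x"
      unfolding T1 T2 using ch2[OF tr[folded c_def] det] by auto
    have "pi1 b (mpow T (Suc (Suc k)) *v x) = t11 * pi1 b (mpow T (Suc k) *v x) + t12 * pi2 b (mpow T (Suc k) *v x)"
      by (simp only: mpow_Suc_v T1)
    also have "\<dots> = U (Suc k) * (t11 * pi1 b (T *v x) + t12 * pi2 b (T *v x)) - U k * pi1 b (T *v x)"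
      by (simp only: Suc.IH[THEN conjunct1] Suc.IH[THEN conjunct2]) (simp add: algebra_simps T1[of x])
    also have "\<dots> = U (Suc (Suc k)) * pi1 b (T *v x) - U (Suc k) * pi1 b x"
      unfolding C Urec by (simp add: algebra_simps)
    finally have A1: "pi1 b (mpow T (Suc (Suc k)) *v x) = U (Suc (Suc k)) * pi1 b (T *v x) - U (Suc k) * pi1 b x" .
    have "pi2 b (mpow T (Suc (Suc k)) *v x) = t21 * pi1 b (mpow T (Suc k) *v x) + t22 * pi2 b (mpow T (Suc k) *v x)"
      by (simp only: mpow_Suc_v T2)
    also have "\<dots> = U (Suc k) * (t21 * pi1 b (T *v x) + t22 * pi2 b (T *v x)) - U k * pi2 b (T *v x)"
      by (simp only: Suc.IH[THEN conjunct1] Suc.IH[THEN conjunct2]) (simp add: algebra_simps T2[of x])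
    also have "\<dots> = U (Suc (Suc k)) * pi2 b (T *v x) - U (Suc k) * pi2 b x"
      unfolding C Urec by (simp add: algebra_simps)
    finally show ?case using A1 by simp
  qed
  obtain k where n: "n = Suc k" using s(4) by (cases n) auto
  have "U n = 0" using s(2) by (simp add: U_def)
  moreover have "U k = 1" using s(3) s(1) n by (simp add: U_def)
  ultimately show ?thesis using P[of k] n by simp
qed




lemma comp_case:
  fixes P Q N1 N2 V :: "complex^3^3" and b :: "complex^3" and \<phi> :: real
  assumes b1: "b$1 \<noteq> 0" and Pb: "P *v b = b" and Qb: "Q *v b = b"
  and P1: "\<And>x. pi1 b (P *v x) = p11 * pi1 b x + p12 * pi2 b x"
  and P2: "\<And>x. pi2 b (P *v x) = p21 * pi1 b x + p22 * pi2 b x"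
  and Q1: "\<And>x. pi1 b (Q *v x) = q11 * pi1 b x + q12 * pi2 b x"
  and Q2: "\<And>x. pi2 b (Q *v x) = q21 * pi1 b x + q22 * pi2 b x"
  and n1: "corresponds b N1 (u1, v1)" and n2: "corresponds b N2 (u2, v2)"
  and nV: "corresponds b V (g1, g2)"
  and t: "t11 = p11*q11 + p12*q21" "t12 = p11*q12 + p12*q22"
         "t21 = p21*q11 + p22*q21" "t22 = p21*q12 + p22*q22"
  and f: "f1 = u1*q11 + v1*q21 + u2" "f2 = u1*q12 + v1*q22 + v2"
  and tr: "t11 + t22 = 2 * of_real (cos \<phi>)" and det0: "(p11*p22 - p12*p21)*(q11*q22 - q12*q21) = 1"
  and s: "sin \<phi> \<noteq> 0" "sin (real n * \<phi>) = 0" "sin (real (n - 1) * \<phi>) = sin \<phi>" "n \<ge> 1"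
  and G1: "g1*(1-t11) - g2*t21 = 2*f1" and G2: "-g1*t12 + g2*(1-t22) = 2*f2"
  shows "mpow ((P ** N1) ** (Q ** N2)) n = mpow (P ** Q) n ** V"
proof -
  have "t11*t22 - t12*t21 = (p11*p22 - p12*p21)*(q11*q22 - q12*q21)" unfolding t by (simp add: algebra_simps)
  then have det: "t11*t22 - t12*t21 = 1" using det0 by simp
  have N1x: "N1 *v x = x + (u1 * pi1 b x + v1 * pi2 b x) *s b" for x
    using corr_act[OF b1 n1] by simp
  have N2x: "N2 *v x = x + (u2 * pi1 b x + v2 * pi2 b x) *s b" for x
    using corr_act[OF b1 n2] by simp
  have Vx: "V *v x = x + (g1 * pi1 b x + g2 * pi2 b x) *s b" for x
    using corr_act[OF b1 nV] by simp
  have Tb: "(P ** Q) *v b = b" by (simp add: matrix_vector_mul_assoc[symmetric] Pb Qb)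
  have T1: "pi1 b ((P ** Q) *v x) = t11 * pi1 b x + t12 * pi2 b x" for x
    by (simp add: matrix_vector_mul_assoc[symmetric] P1 Q1 Q2 t algebra_simps)
  have T2: "pi2 b ((P ** Q) *v x) = t21 * pi1 b x + t22 * pi2 b x" for x
    by (simp add: matrix_vector_mul_assoc[symmetric] P2 Q1 Q2 t algebra_simps)
  have Ax: "((P ** N1) ** (Q ** N2)) *v x = (P ** Q) *v x + (f1 * pi1 b x + f2 * pi2 b x) *s b" for x
  proof -
    define c where "c = u2 * pi1 b x + v2 * pi2 b x"
    have "((P ** N1) ** (Q ** N2)) *v x = P *v (N1 *v (Q *v (N2 *v x)))"
      by (simp add: matrix_vector_mul_assoc matrix_mul_assoc)
    also have "Q *v (N2 *v x) = Q *v x + c *s b"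
      by (simp add: N2x c_def matrix_vector_right_distrib vector_scalar_commute Qb)
    also have "N1 *v (Q *v x + c *s b) = Q *v x + (c + u1 * pi1 b (Q *v x) + v1 * pi2 b (Q *v x)) *s b"
      by (simp add: N1x pi_b[OF b1] pi_lin pi_bb[OF b1] vector_sadd_rdistrib algebra_simps)
    also have "P *v \<dots> = (P ** Q) *v x + (c + u1 * pi1 b (Q *v x) + v1 * pi2 b (Q *v x)) *s b"
      by (simp add: matrix_vector_right_distrib vector_scalar_commute Pb matrix_vector_mul_assoc)
    also have "c + u1 * pi1 b (Q *v x) + v1 * pi2 b (Q *v x) = f1 * pi1 b x + f2 * pi2 b x"
      by (simp add: c_def Q1 Q2 f algebra_simps)
    finally show ?thesis .
  qed
  have pw: "pi1 b (mpow (P ** Q) n *v x) = - pi1 b x \<and> pi2 b (mpow (P ** Q) n *v x) = - pi2 b x" for x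
    by (rule cheb[OF T1 T2 tr det s])
  show ?thesis
    by (rule gen_pow[OF b1 Tb Ax Vx T1 T2 pw[THEN conjunct1] pw[THEN conjunct2] G1 G2])
qed




lemma sin_ne0:
  fixes k p :: nat assumes "p \<ge> 2" "gcd k p = 1"
  shows "sin (pi * real k / real p) \<noteq> 0"
proof
  assume "sin (pi * real k / real p) = 0"
  then obtain i :: int where i: "pi * real k / real p = real_of_int i * pi"
    by (auto simp: sin_zero_iff_int2)
  have "real k = real_of_int i * real p" using i assms(1) by (simp add: field_simps)
  then have "int k = i * int p" by (metis of_int_eq_iff of_int_mult of_int_of_nat_eq)
  then have "int p dvd int k" by simp
  then have "p dvd k" by simp
  then have "p dvd gcd k p" by simp
  then show False using assms by simp
qed

lemma four_minus_ne0:
  fixes k p :: nat assumes "p \<ge> 2" "gcd k p = 1"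
  shows "4 - complex_of_real (4 * (cos (pi * real k / real p))^2) \<noteq> 0"
proof -
  have "4 - 4 * (cos (pi * real k / real p))^2 = 4 * (sin (pi * real k / real p))^2"
    by (simp add: sin_squared_eq algebra_simps)
  also have "\<dots> \<noteq> 0" using sin_ne0[OF assms] by simp
  finally have "(4::real) - 4 * (cos (pi * real k / real p))^2 \<noteq> 0" .
  then have "complex_of_real (4 - 4 * (cos (pi * real k / real p))^2) \<noteq> 0"
    by (metis of_real_eq_0_iff)
  then show ?thesis by simp
qed

lemma trig_data:
  fixes k p p1 :: nat assumes "p = 2 * p1" "p \<ge> 3" "gcd k p = 1"
  defines "\<phi> \<equiv> 2 * pi * real k / real p"
  shows "complex_of_real (4 * (cos (pi * real k / real p))^2) - 2 = 2 * of_real (cos \<phi>)"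
    and "sin \<phi> \<noteq> 0" "sin (real p1 * \<phi>) = 0" "sin (real (p1 - 1) * \<phi>) = sin \<phi>" "p1 \<ge> 1"
proof -
  have p1: "p1 \<ge> 2" using assms by simp
  have phi: "\<phi> = pi * real k / real p1" using assms(1) p1 by (simp add: \<phi>_def)
  have "cos \<phi> = 2 * (cos (pi * real k / real p))^2 - 1"
    unfolding \<phi>_def using cos_double_cos[of "pi * real k / real p"] by (simp add: field_simps)
  then have "4 * (cos (pi * real k / real p))^2 - 2 = 2 * cos \<phi>" by simp
  then have "complex_of_real (4 * (cos (pi * real k / real p))^2 - 2) = complex_of_real (2 * cos \<phi>)"
    by simp
  then show "complex_of_real (4 * (cos (pi * real k / real p))^2) - 2 = 2 * of_real (cos \<phi>)"
    by simp
  have g1: "gcd k p1 = 1"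
  proof -
    have "gcd k p1 dvd k" by simp
    moreover have "gcd k p1 dvd p" unfolding assms(1) by (simp add: dvd_mult)
    ultimately have "gcd k p1 dvd gcd k p" by (rule gcd_greatest)
    then show ?thesis using assms(3) by simp
  qed
  show "sin \<phi> \<noteq> 0" using sin_ne0[OF p1 g1] phi by simp
  have kp: "real p1 * \<phi> = real k * pi" using phi p1 by simp
  show "sin (real p1 * \<phi>) = 0" unfolding kp by (rule sin_npi)
  have odd: "odd k"
  proof
    assume "even k"
    then have "2 dvd gcd k p" using assms(1) by (simp add: gcd_greatest)
    then show False using assms(3) by simp
  qed
  have e: "real (p1 - 1) * \<phi> = real k * pi - \<phi>"
    using kp p1 by (simp add: of_nat_diff algebra_simps)
  show "sin (real (p1 - 1) * \<phi>) = sin \<phi>"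
    unfolding e sin_diff using odd by simp
  show "p1 \<ge> 1" using p1 by simp
qed




lemma refl_pis:
  fixes b :: "complex^3" and e1 e2 \<alpha> \<beta> l m :: complex
  assumes E1: "e1 = b$2/b$1" and E2: "e2 = b$3/b$1"
  and R: "2*e1 - 1 - l*e2 = 0" "(4 - l*m)*e2 - (m + 2) = 0" "\<alpha>*(1 + l*e2) + 2*\<beta>*e2 - 4 = 0"
         "8 - 2*\<alpha> - 2*\<beta> - 2*l*m - \<alpha>*l - \<beta>*m = 0"
  shows "pi1 b (refl1 \<alpha> \<beta> *v x) = (1 - \<alpha>*e1) * pi1 b x + (-(\<beta>*e1)) * pi2 b x"
    and "pi2 b (refl1 \<alpha> \<beta> *v x) = (-(\<alpha>*e2)) * pi1 b x + (1 - \<beta>*e2) * pi2 b x"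
    and "pi1 b (refl2 l *v x) = (-1) * pi1 b x + l * pi2 b x"
    and "pi2 b (refl2 l *v x) = 0 * pi1 b x + 1 * pi2 b x"
    and "pi1 b (refl3 m *v x) = 1 * pi1 b x + 0 * pi2 b x"
    and "pi2 b (refl3 m *v x) = m * pi1 b x + (-1) * pi2 b x"
proof -
  have p1: "pi1 b y = y$2 - e1 * y$1" for y by (simp add: pi1_def E1)
  have p2: "pi2 b y = y$3 - e2 * y$1" for y by (simp add: pi2_def E2)
  show "pi1 b (refl1 \<alpha> \<beta> *v x) = (1 - \<alpha>*e1) * pi1 b x + (-(\<beta>*e1)) * pi2 b x"
    unfolding p1 p2 refl1_mv
    using id_s1a[where xa="x$1" and xb="x$2" and xc="x$3" and al=\<alpha> and be=\<beta> and l=l and m=m and ea=e1 and eb=e2, OF R]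
    by (simp add: a1_def axis_def)
  show "pi2 b (refl1 \<alpha> \<beta> *v x) = (-(\<alpha>*e2)) * pi1 b x + (1 - \<beta>*e2) * pi2 b x"
    unfolding p1 p2 refl1_mv
    using id_s1b[where xa="x$1" and xb="x$2" and xc="x$3" and al=\<alpha> and be=\<beta> and l=l and m=m and ea=e1 and eb=e2, OF R]
    by (simp add: a1_def axis_def)
  show "pi1 b (refl2 l *v x) = (-1) * pi1 b x + l * pi2 b x"
    unfolding p1 p2 refl2_mv
    using id_s2a[where xa="x$1" and xb="x$2" and xc="x$3" and al=\<alpha> and be=\<beta> and l=l and m=m and ea=e1 and eb=e2, OF R]
    by (simp add: a2_def axis_def)
  show "pi2 b (refl2 l *v x) = 0 * pi1 b x + 1 * pi2 b x"
    unfolding p1 p2 refl2_mv by (simp add: a2_def axis_def)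
  show "pi1 b (refl3 m *v x) = 1 * pi1 b x + 0 * pi2 b x"
    unfolding p1 p2 refl3_mv by (simp add: a3_def axis_def)
  show "pi2 b (refl3 m *v x) = m * pi1 b x + (-1) * pi2 b x"
    unfolding p1 p2 refl3_mv
    using id_s3b[where xa="x$1" and xb="x$2" and xc="x$3" and al=\<alpha> and be=\<beta> and l=l and m=m and ea=e1 and eb=e2, OF R]
    by (simp add: a3_def axis_def)
qed




theorem corollary2:
  fixes p q r k1 k2 k3 :: nat and \<alpha> \<beta> \<gamma> l m lam1 lam2 lam3 :: complex
    and K :: "complex set" and \<nu>1 \<nu>2 \<nu>3 :: "complex^3^3"
  assumes pqr: "p \<ge> 3" "q \<ge> 3" "r \<ge> 3"
    and gcds: "gcd k1 p = 1" "gcd k2 q = 1" "gcd k3 r = 1"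
    and alpha: "\<alpha> = of_real (4 * (cos (pi * real k1 / real p))^2)"
    and beta: "\<beta> = of_real (4 * (cos (pi * real k2 / real q))^2)"
    and gamma: "\<gamma> = of_real (4 * (cos (pi * real k3 / real r))^2)"
    and lm: "l * m = \<gamma>"
    and K: "is_subfield_of_complex K" "\<alpha> \<in> K" "\<beta> \<in> K" "\<gamma> \<in> K" "l \<in> K" "m \<in> K"
    and Delta0: "Delta \<alpha> \<beta> \<gamma> l m = 0"
    and lamK: "lam1 \<in> K" "lam2 \<in> K" "lam3 \<in> K"
    and nu1: "\<nu>1 \<in> gen_group {refl1 \<alpha> \<beta>, refl2 l, refl3 m}"
             "corresponds (bvec \<gamma> l m) \<nu>1 (psc lam1 (\<alpha>, \<beta>))"
    and nu2: "\<nu>2 \<in> gen_group {refl1 \<alpha> \<beta>, refl2 l, refl3 m}"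
             "corresponds (bvec \<gamma> l m) \<nu>2 (psc lam2 (-2, l))"
    and nu3: "\<nu>3 \<in> gen_group {refl1 \<alpha> \<beta>, refl2 l, refl3 m}"
             "corresponds (bvec \<gamma> l m) \<nu>3 (psc lam3 (m, -2))"
  shows
    "(\<forall>p1. p = 2 * p1 \<longrightarrow>
        (let \<nu> = psc (2 / (4 - \<alpha>)) (padd (psc (2*lam1 + lam2) (\<alpha>, \<beta>))
                                           (psc (\<alpha>*lam1 + 2*lam2) (-2, l)))
         in \<nu> = (-2*lam2, 2*(2*\<beta> + \<alpha>*l)/(4-\<alpha>) * lam1 + 2*(\<beta> + 2*l)/(4-\<alpha>) * lam2)
          \<and> (\<forall>V. corresponds (bvec \<gamma> l m) V \<nu> \<longrightarrow>
               mpow ((refl1 \<alpha> \<beta> ** \<nu>1) ** (refl2 l ** \<nu>2)) p1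
                 = mpow (refl1 \<alpha> \<beta> ** refl2 l) p1 ** V)))
   \<and> (\<forall>q1. q = 2 * q1 \<longrightarrow>
        (let \<nu>' = psc (2 / (4 - \<beta>)) (padd (psc (2*lam1 + lam3) (\<alpha>, \<beta>))
                                            (psc (\<beta>*lam1 + 2*lam3) (m, -2)))
         in \<nu>' = (2*(2*\<alpha> + \<beta>*m)/(4-\<beta>) * lam1 + 2*(\<alpha> + 2*m)/(4-\<beta>) * lam3, -2*lam3)
          \<and> (\<forall>V. corresponds (bvec \<gamma> l m) V \<nu>' \<longrightarrow>
               mpow ((refl1 \<alpha> \<beta> ** \<nu>1) ** (refl3 m ** \<nu>3)) q1
                 = mpow (refl1 \<alpha> \<beta> ** refl3 m) q1 ** V)))
   \<and> (\<forall>r1. r = 2 * r1 \<longrightarrow>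
        (let \<nu>'' = psc (2 / (4 - \<gamma>)) (padd (psc (2*lam2 + m*lam3) (-2, l))
                                             (psc (l*lam2 + 2*lam3) (m, -2)))
         in \<nu>'' = (-2*lam2, -2*lam3)
          \<and> (\<forall>V. corresponds (bvec \<gamma> l m) V \<nu>'' \<longrightarrow>
               mpow ((refl2 l ** \<nu>2) ** (refl3 m ** \<nu>3)) r1
                 = mpow (refl2 l ** refl3 m) r1 ** V)))"
proof -
  define b where "b = bvec \<gamma> l m"
  have ga: "\<gamma> = l*m" using lm by simp
  have bc: "b$1 = 4 - l*m" "b$2 = l + 2" "b$3 = m + 2"
    by (simp_all add: b_def bvec_def a1_def a2_def a3_def axis_def ga)
  have d: "4 - l*m \<noteq> 0" using four_minus_ne0[of r k3] pqr gcds gamma ga by simp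
  have a4: "4 - \<alpha> \<noteq> 0" using four_minus_ne0[of p k1] pqr gcds alpha by simp
  have b4: "4 - \<beta> \<noteq> 0" using four_minus_ne0[of q k2] pqr gcds beta by simp
  have b1: "b$1 \<noteq> 0" using bc d by simp
  define e1 where "e1 = b$2/b$1"
  define e2 where "e2 = b$3/b$1"
  have Dl: "8 - 2*\<alpha> - 2*\<beta> - 2*l*m - \<alpha>*l - \<beta>*m = 0"
    using Delta0 unfolding Delta_def ga by (simp add: algebra_simps)
  have e1v: "e1 = (l+2)/(4 - l*m)" and e2v: "e2 = (m+2)/(4 - l*m)" by (simp_all add: e1_def e2_def bc)
  have zero_of: "x = 0" if "(4 - l*m) * x = 0" for x using that d by simp
  have d1: "(4 - l*m)*e1 = l + 2" using d by (simp add: e1v)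
  have d2: "(4 - l*m)*e2 = m + 2" using d by (simp add: e2v)
  have R1: "2*e1 - 1 - l*e2 = 0"
  proof (rule zero_of)
    have "(4 - l*m) * (2*e1 - 1 - l*e2) = 2*((4 - l*m)*e1) - (4 - l*m) - l*((4 - l*m)*e2)"
      by (simp add: algebra_simps)
    also have "\<dots> = 0" unfolding d1 d2 by (simp add: algebra_simps)
    finally show "(4 - l*m) * (2*e1 - 1 - l*e2) = 0" .
  qed
  have R2: "(4 - l*m)*e2 - (m + 2) = 0" using d2 by simp
  have R3: "\<alpha>*(1 + l*e2) + 2*\<beta>*e2 - 4 = 0"
  proof (rule zero_of)
    have "(4 - l*m) * (\<alpha>*(1 + l*e2) + 2*\<beta>*e2 - 4) = \<alpha>*((4 - l*m) + l*((4 - l*m)*e2)) + 2*\<beta>*((4 - l*m)*e2) - 4*(4 - l*m)"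
      by (simp add: algebra_simps)
    also have "\<dots> = -2 * (8 - 2*\<alpha> - 2*\<beta> - 2*l*m - \<alpha>*l - \<beta>*m)"
      unfolding d1 d2 by (simp add: algebra_simps)
    also have "\<dots> = 0" using Dl by simp
    finally show "(4 - l*m) * (\<alpha>*(1 + l*e2) + 2*\<beta>*e2 - 4) = 0" .
  qed
  have S1: "2*e2 - 1 - m*e1 = 0"
  proof (rule zero_of)
    have "(4 - l*m) * (2*e2 - 1 - m*e1) = 2*((4 - l*m)*e2) - (4 - l*m) - m*((4 - l*m)*e1)"
      by (simp add: algebra_simps)
    also have "\<dots> = 0" unfolding d1 d2 by (simp add: algebra_simps)
    finally show "(4 - l*m) * (2*e2 - 1 - m*e1) = 0" .
  qed
  have S2: "(4 - l*m)*e1 - (l + 2) = 0" using d1 by simp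
  have S3: "\<beta>*(1 + m*e1) + 2*\<alpha>*e1 - 4 = 0"
  proof (rule zero_of)
    have "(4 - l*m) * (\<beta>*(1 + m*e1) + 2*\<alpha>*e1 - 4) = \<beta>*((4 - l*m) + m*((4 - l*m)*e1)) + 2*\<alpha>*((4 - l*m)*e1) - 4*(4 - l*m)"
      by (simp add: algebra_simps)
    also have "\<dots> = -2 * (8 - 2*\<alpha> - 2*\<beta> - 2*l*m - \<alpha>*l - \<beta>*m)"
      unfolding d1 d2 by (simp add: algebra_simps)
    also have "\<dots> = 0" using Dl by simp
    finally show "(4 - l*m) * (\<beta>*(1 + m*e1) + 2*\<alpha>*e1 - 4) = 0" .
  qed
  note pis = refl_pis[OF e1_def e2_def R1 R2 R3 Dl]
  have Pb1: "refl1 \<alpha> \<beta> *v b = b"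
  proof -
    have "2 * b$1 - \<alpha> * b$2 - \<beta> * b$3 = 0" unfolding bc using Dl by (simp add: algebra_simps)
    then show ?thesis by (simp add: refl1_mv)
  qed
  have Pb2: "refl2 l *v b = b"
  proof -
    have "- b$1 + 2 * b$2 - l * b$3 = 0" unfolding bc by (simp add: algebra_simps)
    then show ?thesis by (simp add: refl2_mv)
  qed
  have Pb3: "refl3 m *v b = b"
  proof -
    have "- b$1 - m * b$2 + 2 * b$3 = 0" unfolding bc by (simp add: algebra_simps)
    then show ?thesis by (simp add: refl3_mv)
  qed
  have n1: "corresponds b \<nu>1 (lam1*\<alpha>, lam1*\<beta>)" using nu1(2) by (simp add: b_def psc_def)
  have n2: "corresponds b \<nu>2 (-2*lam2, lam2*l)" using nu2(2) by (simp add: b_def psc_def mult.commute)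
  have n3: "corresponds b \<nu>3 (lam3*m, -2*lam3)" using nu3(2) by (simp add: b_def psc_def mult.commute)
  have detS1: "((1 - \<alpha>*e1)*(1 - \<beta>*e2) - (-(\<beta>*e1))*(-(\<alpha>*e2))) = -1"
    by (rule id_detS1[OF R1 R2 R3 Dl])
  have case1: "\<forall>p1. p = 2 * p1 \<longrightarrow>
        (let \<nu> = psc (2 / (4 - \<alpha>)) (padd (psc (2*lam1 + lam2) (\<alpha>, \<beta>))
                                           (psc (\<alpha>*lam1 + 2*lam2) (-2, l)))
         in \<nu> = (-2*lam2, 2*(2*\<beta> + \<alpha>*l)/(4-\<alpha>) * lam1 + 2*(\<beta> + 2*l)/(4-\<alpha>) * lam2)
          \<and> (\<forall>V. corresponds (bvec \<gamma> l m) V \<nu> \<longrightarrow>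
               mpow ((refl1 \<alpha> \<beta> ** \<nu>1) ** (refl2 l ** \<nu>2)) p1
                 = mpow (refl1 \<alpha> \<beta> ** refl2 l) p1 ** V))"
  proof (intro allI impI)
    fix p1 assume pp: "p = 2 * p1"
    define w where "w = 2*(2*\<beta> + \<alpha>*l)/(4-\<alpha>) * lam1 + 2*(\<beta> + 2*l)/(4-\<alpha>) * lam2"
    have nueq: "psc (2 / (4 - \<alpha>)) (padd (psc (2*lam1 + lam2) (\<alpha>, \<beta>)) (psc (\<alpha>*lam1 + 2*lam2) (-2, l)))
        = (-2*lam2, w)"
    proof -
      have x1: "(2*lam1 + lam2)*\<alpha> + (\<alpha>*lam1 + 2*lam2)*(-2) = (4 - \<alpha>) * (-lam2)" by (simp add: algebra_simps)
      have c1: "2/(4 - \<alpha>) * ((2*lam1 + lam2)*\<alpha> + (\<alpha>*lam1 + 2*lam2)*(-2)) = -2*lam2"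
        unfolding x1 using a4 by simp
      have x2: "(2*lam1 + lam2)*\<beta> + (\<alpha>*lam1 + 2*lam2)*l = (2*\<beta> + \<alpha>*l)*lam1 + (\<beta> + 2*l)*lam2"
        by (simp add: algebra_simps)
      have c2: "2/(4 - \<alpha>) * ((2*lam1 + lam2)*\<beta> + (\<alpha>*lam1 + 2*lam2)*l) = w"
        unfolding x2 w_def by (simp add: algebra_simps add_divide_distrib)
      show ?thesis unfolding psc_def padd_def prod.sel c1 c2 by simp
    qed
    have W0: "w*(4 - \<alpha>) = 2*(2*\<beta> + \<alpha>*l)*lam1 + 2*(\<beta> + 2*l)*lam2"
    proof -
      have h: "x/(4 - \<alpha>)*y*(4 - \<alpha>) = x*y" for x y using a4 by simp
      show ?thesis unfolding w_def distrib_right h by simp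
    qed
    have W: "w*\<alpha> - (4*w - (2*(2*\<beta> + \<alpha>*l)*lam1 + 2*(\<beta> + 2*l)*lam2)) = 0"
      unfolding W0[symmetric] by (simp add: algebra_simps)
    note T = trig_data[OF pp pqr(1) gcds(1)]
    have tr: "(1 - \<alpha>*e1)*(-1) + (-(\<beta>*e1))*0 + ((-(\<alpha>*e2))*l + (1 - \<beta>*e2)*1)
        = 2 * of_real (cos (2 * pi * real k1 / real p))"
      using c1_tr[where al=\<alpha> and be=\<beta> and l=l and m=m and ea=e1 and eb=e2, OF R1 R2 R3 Dl]
        T(1)[folded alpha] by simp
    have det: "((1 - \<alpha>*e1)*(1 - \<beta>*e2) - (-(\<beta>*e1))*(-(\<alpha>*e2))) * ((-1)*1 - l*0) = 1"
      using detS1 by simp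
    note G1 = c1_G1[where al=\<alpha> and be=\<beta> and l=l and m=m and ea=e1 and eb=e2 and La=lam1 and Lb=lam2 and w=w, OF R1 R2 R3 Dl W a4]
    note G2 = c1_G2[where al=\<alpha> and be=\<beta> and l=l and m=m and ea=e1 and eb=e2 and La=lam1 and Lb=lam2 and w=w, OF R1 R2 R3 Dl W a4]
    show "let \<nu> = psc (2 / (4 - \<alpha>)) (padd (psc (2*lam1 + lam2) (\<alpha>, \<beta>))
                                           (psc (\<alpha>*lam1 + 2*lam2) (-2, l)))
         in \<nu> = (-2*lam2, 2*(2*\<beta> + \<alpha>*l)/(4-\<alpha>) * lam1 + 2*(\<beta> + 2*l)/(4-\<alpha>) * lam2)
          \<and> (\<forall>V. corresponds (bvec \<gamma> l m) V \<nu> \<longrightarrow>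
               mpow ((refl1 \<alpha> \<beta> ** \<nu>1) ** (refl2 l ** \<nu>2)) p1
                 = mpow (refl1 \<alpha> \<beta> ** refl2 l) p1 ** V)"
      unfolding Let_def nueq
    proof (intro conjI allI impI)
      show "(-2*lam2, w) = (-2*lam2, 2*(2*\<beta> + \<alpha>*l)/(4-\<alpha>) * lam1 + 2*(\<beta> + 2*l)/(4-\<alpha>) * lam2)"
        by (simp add: w_def)
      fix V assume "corresponds (bvec \<gamma> l m) V (-2*lam2, w)"
      then have nV: "corresponds b V (-2*lam2, w)" by (simp add: b_def)
      show "mpow ((refl1 \<alpha> \<beta> ** \<nu>1) ** (refl2 l ** \<nu>2)) p1 = mpow (refl1 \<alpha> \<beta> ** refl2 l) p1 ** V"
        by (rule comp_case[OF b1 Pb1 Pb2 pis(1) pis(2) pis(3) pis(4) n1 n2 nV refl refl refl refl refl refl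
              tr det T(2) T(3) T(4) T(5) G1 G2])
    qed
  qed
  have case2: "\<forall>q1. q = 2 * q1 \<longrightarrow>
        (let \<nu>' = psc (2 / (4 - \<beta>)) (padd (psc (2*lam1 + lam3) (\<alpha>, \<beta>))
                                            (psc (\<beta>*lam1 + 2*lam3) (m, -2)))
         in \<nu>' = (2*(2*\<alpha> + \<beta>*m)/(4-\<beta>) * lam1 + 2*(\<alpha> + 2*m)/(4-\<beta>) * lam3, -2*lam3)
          \<and> (\<forall>V. corresponds (bvec \<gamma> l m) V \<nu>' \<longrightarrow>
               mpow ((refl1 \<alpha> \<beta> ** \<nu>1) ** (refl3 m ** \<nu>3)) q1
                 = mpow (refl1 \<alpha> \<beta> ** refl3 m) q1 ** V))"
  proof (intro allI impI)
    fix q1 assume qq: "q = 2 * q1"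
    define w where "w = 2*(2*\<alpha> + \<beta>*m)/(4-\<beta>) * lam1 + 2*(\<alpha> + 2*m)/(4-\<beta>) * lam3"
    have nueq: "psc (2 / (4 - \<beta>)) (padd (psc (2*lam1 + lam3) (\<alpha>, \<beta>)) (psc (\<beta>*lam1 + 2*lam3) (m, -2)))
        = (w, -2*lam3)"
    proof -
      have x1: "(2*lam1 + lam3)*\<beta> + (\<beta>*lam1 + 2*lam3)*(-2) = (4 - \<beta>) * (-lam3)" by (simp add: algebra_simps)
      have c1: "2/(4 - \<beta>) * ((2*lam1 + lam3)*\<beta> + (\<beta>*lam1 + 2*lam3)*(-2)) = -2*lam3"
        unfolding x1 using b4 by simp
      have x2: "(2*lam1 + lam3)*\<alpha> + (\<beta>*lam1 + 2*lam3)*m = (2*\<alpha> + \<beta>*m)*lam1 + (\<alpha> + 2*m)*lam3"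
        by (simp add: algebra_simps)
      have c2: "2/(4 - \<beta>) * ((2*lam1 + lam3)*\<alpha> + (\<beta>*lam1 + 2*lam3)*m) = w"
        unfolding x2 w_def by (simp add: algebra_simps add_divide_distrib)
      show ?thesis unfolding psc_def padd_def prod.sel c1 c2 by simp
    qed
    have W0: "w*(4 - \<beta>) = 2*(2*\<alpha> + \<beta>*m)*lam1 + 2*(\<alpha> + 2*m)*lam3"
    proof -
      have h: "x/(4 - \<beta>)*y*(4 - \<beta>) = x*y" for x y using b4 by simp
      show ?thesis unfolding w_def distrib_right h by simp
    qed
    have W: "w*\<beta> - (4*w - (2*(2*\<alpha> + \<beta>*m)*lam1 + 2*(\<alpha> + 2*m)*lam3)) = 0"
      unfolding W0[symmetric] by (simp add: algebra_simps)
    note T = trig_data[OF qq pqr(2) gcds(2)]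
    have tr: "(1 - \<alpha>*e1)*1 + (-(\<beta>*e1))*m + ((-(\<alpha>*e2))*0 + (1 - \<beta>*e2)*(-1))
        = 2 * of_real (cos (2 * pi * real k2 / real q))"
      using c2_tr[where al=\<alpha> and be=\<beta> and l=l and m=m and ea=e1 and eb=e2, OF S1 S2 S3 Dl]
        T(1)[folded beta] by simp
    have det: "((1 - \<alpha>*e1)*(1 - \<beta>*e2) - (-(\<beta>*e1))*(-(\<alpha>*e2))) * (1*(-1) - 0*m) = 1"
      using detS1 by simp
    note G1 = c2_G1[where al=\<alpha> and be=\<beta> and l=l and m=m and ea=e1 and eb=e2 and La=lam1 and Lc=lam3 and w=w, OF S1 S2 S3 Dl W b4]
    note G2 = c2_G2[where al=\<alpha> and be=\<beta> and l=l and m=m and ea=e1 and eb=e2 and La=lam1 and Lc=lam3 and w=w, OF S1 S2 S3 Dl W b4]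
    show "let \<nu>' = psc (2 / (4 - \<beta>)) (padd (psc (2*lam1 + lam3) (\<alpha>, \<beta>))
                                            (psc (\<beta>*lam1 + 2*lam3) (m, -2)))
         in \<nu>' = (2*(2*\<alpha> + \<beta>*m)/(4-\<beta>) * lam1 + 2*(\<alpha> + 2*m)/(4-\<beta>) * lam3, -2*lam3)
          \<and> (\<forall>V. corresponds (bvec \<gamma> l m) V \<nu>' \<longrightarrow>
               mpow ((refl1 \<alpha> \<beta> ** \<nu>1) ** (refl3 m ** \<nu>3)) q1
                 = mpow (refl1 \<alpha> \<beta> ** refl3 m) q1 ** V)"
      unfolding Let_def nueq
    proof (intro conjI allI impI)
      show "(w, -2*lam3) = (2*(2*\<alpha> + \<beta>*m)/(4-\<beta>) * lam1 + 2*(\<alpha> + 2*m)/(4-\<beta>) * lam3, -2*lam3)"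
        by (simp add: w_def)
      fix V assume "corresponds (bvec \<gamma> l m) V (w, -2*lam3)"
      then have nV: "corresponds b V (w, -2*lam3)" by (simp add: b_def)
      show "mpow ((refl1 \<alpha> \<beta> ** \<nu>1) ** (refl3 m ** \<nu>3)) q1 = mpow (refl1 \<alpha> \<beta> ** refl3 m) q1 ** V"
        by (rule comp_case[OF b1 Pb1 Pb3 pis(1) pis(2) pis(5) pis(6) n1 n3 nV refl refl refl refl refl refl
              tr det T(2) T(3) T(4) T(5) G1 G2])
    qed
  qed
  have case3: "\<forall>r1. r = 2 * r1 \<longrightarrow>
        (let \<nu>'' = psc (2 / (4 - \<gamma>)) (padd (psc (2*lam2 + m*lam3) (-2, l))
                                             (psc (l*lam2 + 2*lam3) (m, -2)))
         in \<nu>'' = (-2*lam2, -2*lam3)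
          \<and> (\<forall>V. corresponds (bvec \<gamma> l m) V \<nu>'' \<longrightarrow>
               mpow ((refl2 l ** \<nu>2) ** (refl3 m ** \<nu>3)) r1
                 = mpow (refl2 l ** refl3 m) r1 ** V))"
  proof (intro allI impI)
    fix r1 assume rr: "r = 2 * r1"
    have nueq: "psc (2 / (4 - \<gamma>)) (padd (psc (2*lam2 + m*lam3) (-2, l)) (psc (l*lam2 + 2*lam3) (m, -2)))
        = (-2*lam2, -2*lam3)"
    proof -
      have x1: "(2*lam2 + m*lam3)*(-2) + (l*lam2 + 2*lam3)*m = (4 - l*m) * (-lam2)" by (simp add: algebra_simps)
      have c1: "2/(4 - l*m) * ((2*lam2 + m*lam3)*(-2) + (l*lam2 + 2*lam3)*m) = -2*lam2"
        unfolding x1 using d by simp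
      have x2: "(2*lam2 + m*lam3)*l + (l*lam2 + 2*lam3)*(-2) = (4 - l*m) * (-lam3)" by (simp add: algebra_simps)
      have c2: "2/(4 - l*m) * ((2*lam2 + m*lam3)*l + (l*lam2 + 2*lam3)*(-2)) = -2*lam3"
        unfolding x2 using d by simp
      show ?thesis unfolding ga psc_def padd_def prod.sel c1 c2 by simp
    qed
    note T = trig_data[OF rr pqr(3) gcds(3)]
    have tr: "(-1)*1 + l*m + (0*0 + 1*(-1))
        = 2 * of_real (cos (2 * pi * real k3 / real r))"
      using c3_tr[where al=\<alpha> and be=\<beta> and l=l and m=m and ea=e1 and eb=e2, OF R1 R2 R3 Dl]
        T(1)[folded gamma, unfolded ga] by simp
    have det: "((-1)*1 - l*0) * (1*(-1) - 0*m) = 1" by simp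
    note G1 = c3_G1[where al=\<alpha> and be=\<beta> and l=l and m=m and ea=e1 and eb=e2 and Lb=lam2 and Lc=lam3, OF R1 R2 R3 Dl]
    note G2 = c3_G2[where al=\<alpha> and be=\<beta> and l=l and m=m and ea=e1 and eb=e2 and Lb=lam2 and Lc=lam3, OF R1 R2 R3 Dl]
    show "let \<nu>'' = psc (2 / (4 - \<gamma>)) (padd (psc (2*lam2 + m*lam3) (-2, l))
                                             (psc (l*lam2 + 2*lam3) (m, -2)))
         in \<nu>'' = (-2*lam2, -2*lam3)
          \<and> (\<forall>V. corresponds (bvec \<gamma> l m) V \<nu>'' \<longrightarrow>
               mpow ((refl2 l ** \<nu>2) ** (refl3 m ** \<nu>3)) r1
                 = mpow (refl2 l ** refl3 m) r1 ** V)"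
      unfolding Let_def nueq
    proof (intro conjI allI impI)
      show "(-2*lam2, -2*lam3) = (-2*lam2, -2*lam3)" by simp
      fix V assume "corresponds (bvec \<gamma> l m) V (-2*lam2, -2*lam3)"
      then have nV: "corresponds b V (-2*lam2, -2*lam3)" by (simp add: b_def)
      show "mpow ((refl2 l ** \<nu>2) ** (refl3 m ** \<nu>3)) r1 = mpow (refl2 l ** refl3 m) r1 ** V"
        by (rule comp_case[OF b1 Pb2 Pb3 pis(3) pis(4) pis(5) pis(6) n2 n3 nV refl refl refl refl refl refl
              tr det T(2) T(3) T(4) T(5) G1 G2])
    qed
  qed
  show ?thesis using case1 case2 case3 by blast
qed


end
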